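(* Let $T$ be a $2\times3\times2$ quaternion tensor, i.e. $T=(A;B;C)$ with $A,B,C\in M_2(\mathbb{H})$. Then $\mathrm{rank}(T)\le3$.
   Context: $\mathbb{H}$ denotes the real quaternions. An $n_1\times n_2\times n_3$ quaternion tensor is an array $T=(T_{ijk})$ with entries in $\mathbb{H}$, $1\le i\le n_1$, $1\le j\le n_2$, $1\le k\le n_3$; it is written $T=(A_1;\dots;A_{n_2})$ where the frontal slice $A_j$ is the $n_1\times n_3$ matrix $(T_{ijk})_{i,k}$. A nonzero tensor is simple if $T_{ijk}=a_ib_jc_k$ (quaternion product in this order) for some $\vec a\in\mathbb{H}^{n_1},\vec b\in\mathbb{H}^{n_2},\vec c\in\mathbb{H}^{n_3}$. The rank of $T$ is the least number of simple tensors summing to $T$ (the zero tensor has rank $0$). *)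

theory Defs
  imports Main "HOL.Real"
begin

datatype quat = Quat (Re: real) (Im1: real) (Im2: real) (Im3: real)

lemma quat_eqI: "Re x = Re y \<Longrightarrow> Im1 x = Im1 y \<Longrightarrow> Im2 x = Im2 y \<Longrightarrow> Im3 x = Im3 y \<Longrightarrow> x = y"
  by (cases x, cases y) simp

instantiation quat :: ring_1
begin
definition "0 = Quat 0 0 0 0"
definition "1 = Quat 1 0 0 0"
definition "x + y = Quat (Re x + Re y) (Im1 x + Im1 y) (Im2 x + Im2 y) (Im3 x + Im3 y)"
definition "x - y = Quat (Re x - Re y) (Im1 x - Im1 y) (Im2 x - Im2 y) (Im3 x - Im3 y)"
definition "- x = Quat (- Re x) (- Im1 x) (- Im2 x) (- Im3 x)"
definition "x * y = Quat
   (Re x * Re y - Im1 x * Im1 y - Im2 x * Im2 y - Im3 x * Im3 y)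
   (Re x * Im1 y + Im1 x * Re y + Im2 x * Im3 y - Im3 x * Im2 y)
   (Re x * Im2 y - Im1 x * Im3 y + Im2 x * Re y + Im3 x * Im1 y)
   (Re x * Im3 y + Im1 x * Im2 y - Im2 x * Im1 y + Im3 x * Re y)"
instance
proof
  show "(0::quat) \<noteq> 1" by (simp add: zero_quat_def one_quat_def)
qed (rule quat_eqI; simp add: zero_quat_def one_quat_def plus_quat_def
      minus_quat_def uminus_quat_def times_quat_def algebra_simps)+
end

text \<open>An n1 x n2 x n3 quaternion tensor is represented by a function
  T :: nat => nat => nat => quat, of which only the entries T i j k with
  i < n1, j < n2, k < n3 (0-based indices) are relevant.\<close>

type_synonym qtensor = "nat \<Rightarrow> nat \<Rightarrow> nat \<Rightarrow> quat"

definition simple_tensor :: "nat \<Rightarrow> nat \<Rightarrow> nat \<Rightarrow> qtensor \<Rightarrow> bool" where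
  "simple_tensor n1 n2 n3 S \<longleftrightarrow>
     (\<exists>i<n1. \<exists>j<n2. \<exists>k<n3. S i j k \<noteq> 0) \<and>
     (\<exists>a b c :: nat \<Rightarrow> quat. \<forall>i<n1. \<forall>j<n2. \<forall>k<n3. S i j k = a i * b j * c k)"

definition tensor_rank :: "nat \<Rightarrow> nat \<Rightarrow> nat \<Rightarrow> qtensor \<Rightarrow> nat" where
  "tensor_rank n1 n2 n3 T = (LEAST r. \<exists>Ss :: qtensor list. length Ss = r \<and>
      (\<forall>S\<in>set Ss. simple_tensor n1 n2 n3 S) \<and>
      (\<forall>i<n1. \<forall>j<n2. \<forall>k<n3. T i j k = (\<Sum>S\<leftarrow>Ss. S i j k)))"

end

theory Submission
  imports Defs "Jordan_Normal_Form.Spectral_Radius"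
begin


definition nsq :: "quat \<Rightarrow> real" where
  "nsq x = (quat.Re x)^2 + (Im1 x)^2 + (Im2 x)^2 + (Im3 x)^2"

lemma quat_zero_iff: "x = 0 \<longleftrightarrow> quat.Re x = 0 \<and> Im1 x = 0 \<and> Im2 x = 0 \<and> Im3 x = 0"
  by (cases x) (simp add: zero_quat_def)

lemma nsq_pos: "x \<noteq> 0 \<Longrightarrow> nsq x > 0"
proof -
  assume "x \<noteq> 0"
  then have "quat.Re x \<noteq> 0 \<or> Im1 x \<noteq> 0 \<or> Im2 x \<noteq> 0 \<or> Im3 x \<noteq> 0" by (simp add: quat_zero_iff)
  then show ?thesis unfolding nsq_def
    by (auto simp: add_pos_nonneg add_nonneg_pos sum_power2_gt_zero_iff)
qed

instantiation quat :: division_ring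
begin
definition "inverse x = Quat (quat.Re x / nsq x) (- Im1 x / nsq x) (- Im2 x / nsq x) (- Im3 x / nsq x)"
definition divide_quat :: "quat \<Rightarrow> quat \<Rightarrow> quat" where "divide_quat x y = x * inverse y"
instance
proof
  fix a :: quat
  assume a: "a \<noteq> 0"
  have n: "nsq a \<noteq> 0" using nsq_pos[OF a] by simp
  show "inverse a * a = 1"
    apply (intro quat_eqI)
    apply (simp_all add: inverse_quat_def times_quat_def one_quat_def field_simps n)
    apply (simp_all add: nsq_def power2_eq_square)
    done
  show "a * inverse a = 1"
    apply (intro quat_eqI)
    apply (simp_all add: inverse_quat_def times_quat_def one_quat_def field_simps n)
    apply (simp_all add: nsq_def power2_eq_square)
    done
next
  fix a b :: quat show "divide a b = a * inverse b" by (simp add: divide_quat_def)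
next
  show "inverse (0::quat) = 0" by (simp add: inverse_quat_def zero_quat_def nsq_def)
qed
end

definition qr :: "real \<Rightarrow> quat" where "qr r = Quat r 0 0 0"
definition qcnj :: "quat \<Rightarrow> quat" where "qcnj x = Quat (quat.Re x) (- Im1 x) (- Im2 x) (- Im3 x)"

lemma qr_comm: "qr r * x = x * qr r"
  by (intro quat_eqI) (simp_all add: qr_def times_quat_def)
lemma qr_add: "qr (a + b) = qr a + qr b" by (simp add: qr_def plus_quat_def)
lemma qr_mult: "qr (a * b) = qr a * qr b" by (intro quat_eqI) (simp_all add: qr_def times_quat_def)
lemma qr_0: "qr 0 = 0" by (simp add: qr_def zero_quat_def)
lemma qr_1: "qr 1 = 1" by (simp add: qr_def one_quat_def)

lemma qcnj_add: "qcnj x + x = qr (2 * quat.Re x)"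
  by (intro quat_eqI) (simp_all add: qr_def qcnj_def plus_quat_def)
lemma qcnj_mult: "qcnj x * x = qr (nsq x)"
  by (intro quat_eqI) (simp_all add: qr_def qcnj_def times_quat_def nsq_def power2_eq_square)


definition zA :: "quat \<Rightarrow> complex" where "zA q = Complex (quat.Re q) (Im1 q)"
definition zB :: "quat \<Rightarrow> complex" where "zB q = Complex (Im2 q) (Im3 q)"

definition chi :: "(nat \<Rightarrow> nat \<Rightarrow> quat) \<Rightarrow> complex mat" where
  "chi M = mat 4 4 (\<lambda>(i,j). if i < 2 then (if j < 2 then zA (M i j) else - zB (M i (j-2)))
                                   else (if j < 2 then cnj (zB (M (i-2) j)) else cnj (zA (M (i-2) (j-2)))))"

lemma sum4: "(\<Sum>j\<in>{0..<4::nat}. f j) = f 0 + f 1 + f 2 + f 3"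
  by (simp add: eval_nat_numeral atLeast0_lessThan_Suc add_ac)

lemma quat_eig:
  fixes M :: "nat \<Rightarrow> nat \<Rightarrow> quat"
  shows "\<exists>v0 v1 l. (v0 \<noteq> 0 \<or> v1 \<noteq> 0) \<and> M 0 0 * v0 + M 0 1 * v1 = v0 * l \<and> M 1 0 * v0 + M 1 1 * v1 = v1 * l"
proof -
  have C: "chi M \<in> carrier_mat 4 4" by (simp add: chi_def)
  obtain k v where ev: "eigenvector (chi M) v k"
    using spectrum_non_empty[OF C] unfolding spectrum_def eigenvalue_def by auto
  have vc: "v \<in> carrier_vec 4" and vnz: "v \<noteq> 0\<^sub>v 4" and eq: "chi M *\<^sub>v v = k \<cdot>\<^sub>v v"
    using ev C unfolding eigenvector_def by auto
  have dv: "dim_vec v = 4" using vc by simp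
  have E: "(\<Sum>j\<in>{0..<4}. chi M $$ (i,j) * v $ j) = k * v $ i" if "i < 4" for i
  proof -
    have "(chi M *\<^sub>v v) $ i = (k \<cdot>\<^sub>v v) $ i" using eq by simp
    then show ?thesis using that dv C by (simp add: scalar_prod_def row_def)
  qed
  have e0: "zA (M 0 0) * v$0 + zA (M 0 1) * v$1 - zB (M 0 0) * v$2 - zB (M 0 1) * v$3 = k * v$0"
    using E[of 0] by (simp add: sum4 chi_def)
  have e1: "zA (M 1 0) * v$0 + zA (M 1 1) * v$1 - zB (M 1 0) * v$2 - zB (M 1 1) * v$3 = k * v$1"
    using E[of 1] by (simp add: sum4 chi_def)
  have e2: "cnj (zB (M 0 0)) * v$0 + cnj (zB (M 0 1)) * v$1 + cnj (zA (M 0 0)) * v$2 + cnj (zA (M 0 1)) * v$3 = k * v$2"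
    using E[of 2] by (simp add: sum4 chi_def)
  have e3: "cnj (zB (M 1 0)) * v$0 + cnj (zB (M 1 1)) * v$1 + cnj (zA (M 1 0)) * v$2 + cnj (zA (M 1 1)) * v$3 = k * v$3"
    using E[of 3] by (simp add: sum4 chi_def)
  define x0 where "x0 = Quat (Re (v$0)) (Im (v$0)) (Re (v$2)) (- Im (v$2))"
  define x1 where "x1 = Quat (Re (v$1)) (Im (v$1)) (Re (v$3)) (- Im (v$3))"
  define l where "l = Quat (Re k) (Im k) 0 0"
  have r0: "Re (lhs) = Re (rhs)" "Im lhs = Im rhs" if "lhs = rhs" for lhs rhs :: complex using that by auto
  note R = r0[OF e0] r0[OF e1] r0[OF e2] r0[OF e3]
  have g0: "M 0 0 * x0 + M 0 1 * x1 = x0 * l"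
    using R unfolding x0_def x1_def l_def
    by (intro quat_eqI) (simp_all add: times_quat_def plus_quat_def zA_def zB_def algebra_simps)
  have g1: "M 1 0 * x0 + M 1 1 * x1 = x1 * l"
    using R unfolding x0_def x1_def l_def
    by (intro quat_eqI) (simp_all add: times_quat_def plus_quat_def zA_def zB_def algebra_simps)
  have nz: "x0 \<noteq> 0 \<or> x1 \<noteq> 0"
  proof (rule ccontr)
    assume "\<not> ?thesis"
    then have "x0 = 0" "x1 = 0" by auto
    then have z: "v$0 = 0" "v$1 = 0" "v$2 = 0" "v$3 = 0"
      unfolding x0_def x1_def by (simp_all add: zero_quat_def complex_eq_iff)
    have "v = 0\<^sub>v 4"
    proof (rule eq_vecI)
      show "dim_vec v = dim_vec (0\<^sub>v 4)" using dv by simp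
      fix i assume "i < dim_vec (0\<^sub>v 4)"
      then have "i < 4" by simp
      then have "i = 0 \<or> i = 1 \<or> i = 2 \<or> i = 3" by auto
      then show "v $ i = 0\<^sub>v 4 $ i" using z \<open>i<4\<close> by auto
    qed
    then show False using vnz by simp
  qed
  show ?thesis using g0 g1 nz by blast
qed


definition rep :: "(nat \<Rightarrow> nat \<Rightarrow> quat) \<Rightarrow> (nat \<Rightarrow> nat \<Rightarrow> quat) \<Rightarrow> (nat \<Rightarrow> nat \<Rightarrow> quat) \<Rightarrow> bool" where
  "rep a c M \<longleftrightarrow> (\<exists>\<beta>::nat \<Rightarrow> quat. \<forall>i<2. \<forall>k<2.
      M i k = a 0 i * \<beta> 0 * c 0 k + a 1 i * \<beta> 1 * c 1 k + a 2 i * \<beta> 2 * c 2 k)"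

lemma all2: "(\<forall>i<(2::nat). P i) \<longleftrightarrow> P 0 \<and> P 1"
  by (auto simp: less_Suc_eq numeral_2_eq_2)

definition v2 :: "quat \<Rightarrow> quat \<Rightarrow> nat \<Rightarrow> quat" where "v2 x y = (\<lambda>i. if i = 0 then x else y)"
definition t3 :: "'a \<Rightarrow> 'a \<Rightarrow> 'a \<Rightarrow> nat \<Rightarrow> 'a" where
  "t3 x y z = (\<lambda>t. if t = 0 then x else if t = 1 then y else z)"

lemma v2_simps[simp]: "v2 x y 0 = x" "v2 x y 1 = y" "v2 x y (Suc 0) = y" by (simp_all add: v2_def)
lemma t3_simps[simp]: "t3 x y z 0 = x" "t3 x y z 1 = y" "t3 x y z (Suc 0) = y" "t3 x y z 2 = z" by (simp_all add: t3_def)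

lemma repI:
  assumes "M 0 0 = a 0 0 * bA * c 0 0 + a 1 0 * bB * c 1 0 + a 2 0 * bC * c 2 0"
    "M 0 1 = a 0 0 * bA * c 0 1 + a 1 0 * bB * c 1 1 + a 2 0 * bC * c 2 1"
    "M 1 0 = a 0 1 * bA * c 0 0 + a 1 1 * bB * c 1 0 + a 2 1 * bC * c 2 0"
    "M 1 1 = a 0 1 * bA * c 0 1 + a 1 1 * bB * c 1 1 + a 2 1 * bC * c 2 1"
  shows "rep a c M"
  unfolding rep_def all2 by (rule exI[of _ "t3 bA bB bC"]) (simp only: t3_simps assms simp_thms)

definition mm :: "(nat \<Rightarrow> nat \<Rightarrow> quat) \<Rightarrow> (nat \<Rightarrow> nat \<Rightarrow> quat) \<Rightarrow> nat \<Rightarrow> nat \<Rightarrow> quat" where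
  "mm X Y = (\<lambda>i k. X i 0 * Y 0 k + X i 1 * Y 1 k)"
definition idm :: "nat \<Rightarrow> nat \<Rightarrow> quat" where "idm = (\<lambda>i k. if i = k then 1 else 0)"

lemma mm_apply: "mm X Y i k = X i 0 * Y 0 k + X i 1 * Y 1 k" by (simp add: mm_def)

lemma mm_assoc: "mm (mm X Y) Z = mm X (mm Y Z)"
  by (simp add: mm_def fun_eq_iff algebra_simps)

lemma rep_cong: "rep a c M \<Longrightarrow> (\<And>i k. i < 2 \<Longrightarrow> k < 2 \<Longrightarrow> M i k = M' i k) \<Longrightarrow> rep a c M'"
  unfolding rep_def by auto

lemma rep_left: assumes "rep a c M"
  shows "rep (\<lambda>t i. G i 0 * a t 0 + G i 1 * a t 1) c (mm G M)"
proof -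
  obtain \<beta> :: "nat \<Rightarrow> quat" where b: "\<forall>i<2. \<forall>k<2. M i k = a 0 i * \<beta> 0 * c 0 k + a 1 i * \<beta> 1 * c 1 k + a 2 i * \<beta> 2 * c 2 k"
    using assms unfolding rep_def by auto
  show ?thesis unfolding rep_def
  proof (intro exI[of _ \<beta>] allI impI)
    fix i k :: nat assume k: "k < 2"
    have "M 0 k = a 0 0 * \<beta> 0 * c 0 k + a 1 0 * \<beta> 1 * c 1 k + a 2 0 * \<beta> 2 * c 2 k"
      "M 1 k = a 0 1 * \<beta> 0 * c 0 k + a 1 1 * \<beta> 1 * c 1 k + a 2 1 * \<beta> 2 * c 2 k" using b k by auto
    then show "mm G M i k = (G i 0 * a 0 0 + G i 1 * a 0 1) * \<beta> 0 * c 0 k +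
          (G i 0 * a 1 0 + G i 1 * a 1 1) * \<beta> 1 * c 1 k + (G i 0 * a 2 0 + G i 1 * a 2 1) * \<beta> 2 * c 2 k"
      by (simp add: mm_def algebra_simps)
  qed
qed

lemma rep_right: assumes "rep a c M"
  shows "rep a (\<lambda>t k. c t 0 * H 0 k + c t 1 * H 1 k) (mm M H)"
proof -
  obtain \<beta> :: "nat \<Rightarrow> quat" where b: "\<forall>i<2. \<forall>k<2. M i k = a 0 i * \<beta> 0 * c 0 k + a 1 i * \<beta> 1 * c 1 k + a 2 i * \<beta> 2 * c 2 k"
    using assms unfolding rep_def by auto
  show ?thesis unfolding rep_def
  proof (intro exI[of _ \<beta>] allI impI)
    fix i k :: nat assume i: "i < 2"
    have "M i 0 = a 0 i * \<beta> 0 * c 0 0 + a 1 i * \<beta> 1 * c 1 0 + a 2 i * \<beta> 2 * c 2 0"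
      "M i 1 = a 0 i * \<beta> 0 * c 0 1 + a 1 i * \<beta> 1 * c 1 1 + a 2 i * \<beta> 2 * c 2 1" using b i by auto
    then show "mm M H i k = a 0 i * \<beta> 0 * (c 0 0 * H 0 k + c 0 1 * H 1 k) +
          a 1 i * \<beta> 1 * (c 1 0 * H 0 k + c 1 1 * H 1 k) + a 2 i * \<beta> 2 * (c 2 0 * H 0 k + c 2 1 * H 1 k)"
      by (simp add: mm_def algebra_simps)
  qed
qed

lemma mm_idm_left: "i < 2 \<Longrightarrow> mm idm X i k = X i k"
  by (auto simp: mm_def idm_def less_Suc_eq numeral_2_eq_2)
lemma mm_idm_right: "k < 2 \<Longrightarrow> mm X idm i k = X i k"
  by (auto simp: mm_def idm_def less_Suc_eq numeral_2_eq_2)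

lemma mm_PQ_left:
  assumes PQ: "\<And>i k. i < 2 \<Longrightarrow> k < 2 \<Longrightarrow> mm P Q i k = idm i k" and i: "i < 2"
  shows "mm (mm P Q) Y i k = Y i k"
proof -
  have h: "mm P Q i 0 = idm i 0" "mm P Q i 1 = idm i 1" using PQ i by auto
  have "mm (mm P Q) Y i k = mm P Q i 0 * Y 0 k + mm P Q i 1 * Y 1 k" by (rule mm_apply)
  also have "\<dots> = idm i 0 * Y 0 k + idm i 1 * Y 1 k" by (simp only: h)
  also have "\<dots> = mm idm Y i k" by (rule mm_apply[symmetric])
  also have "\<dots> = Y i k" using i by (rule mm_idm_left)
  finally show ?thesis .
qed

lemma mm_PQ_right:
  assumes PQ: "\<And>i k. i < 2 \<Longrightarrow> k < 2 \<Longrightarrow> mm P Q i k = idm i k" and k: "k < 2"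
  shows "mm Y (mm P Q) i k = Y i k"
proof -
  have h: "mm P Q 0 k = idm 0 k" "mm P Q 1 k = idm 1 k" using PQ k by auto
  have "mm Y (mm P Q) i k = Y i 0 * mm P Q 0 k + Y i 1 * mm P Q 1 k" by (rule mm_apply)
  also have "\<dots> = Y i 0 * idm 0 k + Y i 1 * idm 1 k" by (simp only: h)
  also have "\<dots> = mm Y idm i k" by (rule mm_apply[symmetric])
  also have "\<dots> = Y i k" using k by (rule mm_idm_right)
  finally show ?thesis .
qed

lemma rep_conj:
  assumes PQ: "\<And>i k. i < 2 \<Longrightarrow> k < 2 \<Longrightarrow> mm P Q i k = idm i k"
    and r: "rep a c (mm Q (mm X P))"
  shows "rep (\<lambda>t i. P i 0 * a t 0 + P i 1 * a t 1) (\<lambda>t k. c t 0 * Q 0 k + c t 1 * Q 1 k) X"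
proof -
  have "rep (\<lambda>t i. P i 0 * a t 0 + P i 1 * a t 1) (\<lambda>t k. c t 0 * Q 0 k + c t 1 * Q 1 k)
          (mm (mm P (mm Q (mm X P))) Q)"
    by (rule rep_right[OF rep_left[OF r]])
  moreover have "mm (mm P (mm Q (mm X P))) Q i k = X i k" if "i < 2" "k < 2" for i k
  proof -
    have "mm (mm P (mm Q (mm X P))) Q = mm (mm P Q) (mm X (mm P Q))"
      by (simp add: mm_assoc)
    then have "mm (mm P (mm Q (mm X P))) Q i k = mm (mm P Q) (mm X (mm P Q)) i k" by simp
    also have "\<dots> = mm X (mm P Q) i k" using PQ that(1) by (rule mm_PQ_left)
    also have "\<dots> = X i k" using PQ that(2) by (rule mm_PQ_right)
    finally show ?thesis .
  qed
  ultimately show ?thesis by (rule rep_cong)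
qed


lemma sos3_zero: "(x::real)^2 + y^2 + z^2 = 0 \<Longrightarrow> x = 0 \<and> y = 0 \<and> z = 0"
  by (smt (verit) power2_less_eq_zero_iff zero_le_power2)

lemma w1_comm: fixes b u1 u2 u3 v1 v2 v3 :: real
  assumes rr: "u1*u1+u2*u2+u3*u3 = v1*v1+v2*v2+v3*v3"
  shows "Quat b v1 v2 v3 * (Quat (u1*u1+u2*u2+u3*u3) 0 0 0 - Quat 0 v1 v2 v3 * Quat 0 u1 u2 u3)
       = (Quat (u1*u1+u2*u2+u3*u3) 0 0 0 - Quat 0 v1 v2 v3 * Quat 0 u1 u2 u3) * Quat b u1 u2 u3"
proof -
  have h: "(u1*u1+u2*u2+u3*u3)*u1 = (v1*v1+v2*v2+v3*v3)*u1"
    "(u1*u1+u2*u2+u3*u3)*u2 = (v1*v1+v2*v2+v3*v3)*u2"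
    "(u1*u1+u2*u2+u3*u3)*u3 = (v1*v1+v2*v2+v3*v3)*u3" using rr by simp_all
  show ?thesis
    apply (intro quat_eqI)
    apply (simp_all add: times_quat_def minus_quat_def)
    using h by (simp_all add: algebra_simps)
qed

lemma w2_comm: fixes b u1 u2 u3 :: real
  shows "Quat b (-u1) (-u2) (-u3) * Quat 0 u2 (-u1) 0 = Quat 0 u2 (-u1) 0 * Quat b u1 u2 u3"
  by (intro quat_eqI) (simp_all add: times_quat_def algebra_simps)

lemma w3_comm: fixes b u3 :: real
  shows "Quat b (-0) (-0) (-u3) * Quat 0 1 0 0 = Quat 0 1 0 0 * Quat b 0 0 u3"
  by (intro quat_eqI) (simp_all add: times_quat_def algebra_simps)

lemma sim_exists:
  fixes l n :: quat
  assumes f: "l * l - qr (2 * quat.Re n) * l + qr (nsq n) = 0"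
  shows "\<exists>w. w \<noteq> 0 \<and> n * w = w * l"
proof -
  obtain a u1 u2 u3 where l: "l = Quat a u1 u2 u3" by (cases l)
  obtain b v1 v2 v3 where n: "n = Quat b v1 v2 v3" by (cases n)
  have fc: "quat.Re (l * l - qr (2 * quat.Re n) * l + qr (nsq n)) = 0"
     "Im1 (l * l - qr (2 * quat.Re n) * l + qr (nsq n)) = 0"
     "Im2 (l * l - qr (2 * quat.Re n) * l + qr (nsq n)) = 0"
     "Im3 (l * l - qr (2 * quat.Re n) * l + qr (nsq n)) = 0"
    using f by (simp_all add: zero_quat_def)
  then have E0: "a*a - u1*u1 - u2*u2 - u3*u3 - 2*b*a + (b*b + v1*v1 + v2*v2 + v3*v3) = 0"
    and E1: "(a - b) * u1 = 0" and E2: "(a - b) * u2 = 0" and E3: "(a - b) * u3 = 0"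
    by (simp_all add: l n times_quat_def plus_quat_def minus_quat_def qr_def nsq_def power2_eq_square algebra_simps)
  have ab: "a = b"
  proof (cases "u1 = 0 \<and> u2 = 0 \<and> u3 = 0")
    case True
    then have "(a - b)^2 + (v1^2 + v2^2 + v3^2) = 0" using E0 by (simp add: power2_eq_square algebra_simps)
    moreover have "v1^2 + v2^2 + v3^2 \<ge> 0" by simp
    ultimately have "(a - b)^2 \<le> 0" by linarith
    then show ?thesis by simp
  next
    case False
    then show ?thesis using E1 E2 E3 by auto
  qed
  have rr: "u1*u1 + u2*u2 + u3*u3 = v1*v1 + v2*v2 + v3*v3" using E0 ab by (simp add: algebra_simps)
  define r where "r = u1*u1 + u2*u2 + u3*u3"
  define w1 where "w1 = Quat r 0 0 0 - Quat 0 v1 v2 v3 * Quat 0 u1 u2 u3"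
  show ?thesis
  proof (cases "w1 = 0")
    case False
    have "n * w1 = w1 * l"
      unfolding n l w1_def r_def ab using w1_comm[OF rr] .
    then show ?thesis using False by blast
  next
    case True
    then have "quat.Re w1 = 0" by (simp add: zero_quat_def)
    then have dot: "r + (v1*u1 + v2*u2 + v3*u3) = 0" unfolding w1_def by (simp add: times_quat_def minus_quat_def)
    have ex: "(u1 + v1)^2 + (u2 + v2)^2 + (u3 + v3)^2 =
        (u1*u1+u2*u2+u3*u3) + 2*(v1*u1+v2*u2+v3*u3) + (v1*v1+v2*v2+v3*v3)"
      by (simp add: power2_eq_square algebra_simps)
    have "(u1 + v1)^2 + (u2 + v2)^2 + (u3 + v3)^2 = 2 * (r + (v1*u1+v2*u2+v3*u3))"
      unfolding ex r_def using rr by (simp add: algebra_simps)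
    then have "(u1 + v1)^2 + (u2 + v2)^2 + (u3 + v3)^2 = 0" using dot by simp
    then have "u1 + v1 = 0 \<and> u2 + v2 = 0 \<and> u3 + v3 = 0" by (rule sos3_zero)
    then have uv: "v1 = - u1" "v2 = - u2" "v3 = - u3" by linarith+
    show ?thesis
    proof (cases "u1 \<noteq> 0 \<or> u2 \<noteq> 0")
      case True
      have "n * Quat 0 u2 (- u1) 0 = Quat 0 u2 (- u1) 0 * l"
        unfolding n l uv ab by (rule w2_comm)
      moreover have "Quat 0 u2 (- u1) 0 \<noteq> 0" using True by (auto simp: zero_quat_def)
      ultimately show ?thesis by blast
    next
      case False
      then have "u1 = 0" "u2 = 0" by auto
      have "n * Quat 0 1 0 0 = Quat 0 1 0 0 * l"
        unfolding n l uv ab \<open>u1 = 0\<close> \<open>u2 = 0\<close> by (rule w3_comm)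
      moreover have "Quat 0 1 0 0 \<noteq> 0" by (auto simp: zero_quat_def)
      ultimately show ?thesis by blast
    qed
  qed
qed


lemma idm_simps[simp]: "idm 0 0 = 1" "idm 0 1 = 0" "idm 1 0 = 0" "idm 1 1 = 1"
  "idm 0 (Suc 0) = 0" "idm (Suc 0) 0 = 0" "idm (Suc 0) (Suc 0) = 1"
  by (simp_all add: idm_def)

lemma core_diag:
  assumes D01: "D 0 1 = 0" and D10: "D 1 0 = 0"
  shows "\<exists>a c. rep a c idm \<and> rep a c D \<and> rep a c C"
proof (cases "C 0 1 = 0")
  case False
  define q where "q = C 1 0 * inverse (C 0 1)"
  define a where "a = t3 (v2 1 0) (v2 0 1) (v2 1 q)"
  define c where "c = t3 (v2 1 0) (v2 0 1) (v2 1 1)"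
  have a: "a 0 0 = 1" "a 0 1 = 0" "a 1 0 = 0" "a 1 1 = 1" "a 2 0 = 1" "a 2 1 = q"
    by (simp_all add: a_def)
  have c: "c 0 0 = 1" "c 0 1 = 0" "c 1 0 = 0" "c 1 1 = 1" "c 2 0 = 1" "c 2 1 = 1"
    by (simp_all add: c_def)
  have qC: "q * C 0 1 = C 1 0" using False by (simp add: q_def mult.assoc)
  have "rep a c idm" by (rule repI[where bA=1 and bB=1 and bC=0]) (simp_all only: a c idm_simps, simp_all)
  moreover have "rep a c D" by (rule repI[where bA="D 0 0" and bB="D 1 1" and bC=0]) (simp_all only: a c D01 D10, simp_all)
  moreover have "rep a c C"
    by (rule repI[where bA="C 0 0 - C 0 1" and bB="C 1 1 - C 1 0" and bC="C 0 1"])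
       (simp_all only: a c qC, simp_all)
  ultimately show ?thesis by blast
next
  case True
  define a where "a = t3 (v2 1 0) (v2 0 1) (v2 0 1)"
  define c where "c = t3 (v2 1 0) (v2 0 1) (v2 1 0)"
  have a: "a 0 0 = 1" "a 0 1 = 0" "a 1 0 = 0" "a 1 1 = 1" "a 2 0 = 0" "a 2 1 = 1"
    by (simp_all add: a_def)
  have c: "c 0 0 = 1" "c 0 1 = 0" "c 1 0 = 0" "c 1 1 = 1" "c 2 0 = 1" "c 2 1 = 0"
    by (simp_all add: c_def)
  have "rep a c idm" by (rule repI[where bA=1 and bB=1 and bC=0]) (simp_all only: a c idm_simps, simp_all)
  moreover have "rep a c D" by (rule repI[where bA="D 0 0" and bB="D 1 1" and bC=0]) (simp_all only: a c D01 D10, simp_all)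
  moreover have "rep a c C"
    by (rule repI[where bA="C 0 0" and bB="C 1 1" and bC="C 1 0"]) (simp_all only: a c True, simp_all)
  ultimately show ?thesis by blast
qed


lemma sylvester:
  fixes l n c :: quat
  assumes f: "l*l - qr (2*quat.Re n)*l + qr (nsq n) \<noteq> 0"
  shows "\<exists>x. l*x - x*n = c"
proof -
  define F where "F = l*l - qr (2*quat.Re n)*l + qr (nsq n)"
  define y where "y = l*c - c*qcnj n"
  have F0: "F \<noteq> 0" using f by (simp add: F_def)
  have e1: "l * c * qr (2 * quat.Re n) = qr (2 * quat.Re n) * (l * c)" by (rule qr_comm[symmetric])
  have e2: "c * qr (nsq n) = qr (nsq n) * c" by (rule qr_comm[symmetric])
  have k1: "l*y - y*n = F*c"
  proof -
    have "l*y - y*n = l*l*c - l*c*(qcnj n + n) + c*(qcnj n * n)"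
      by (simp add: y_def algebra_simps)
    also have "\<dots> = l*l*c - l*c*qr (2*quat.Re n) + c*qr (nsq n)"
      by (simp only: qcnj_add qcnj_mult)
    also have "\<dots> = l*l*c - qr (2*quat.Re n)*(l*c) + qr (nsq n)*c"
      by (simp only: e1 e2)
    also have "\<dots> = F*c" by (simp add: F_def algebra_simps)
    finally show ?thesis .
  qed
  have e3: "l * qr (2 * quat.Re n) = qr (2 * quat.Re n) * l" by (rule qr_comm[symmetric])
  have e4: "l * qr (nsq n) = qr (nsq n) * l" by (rule qr_comm[symmetric])
  have k2: "l*F = F*l"
  proof -
    have "l*F = l*l*l - (l*qr (2*quat.Re n))*l + l*qr (nsq n)" by (simp add: F_def algebra_simps)
    also have "\<dots> = l*l*l - qr (2*quat.Re n)*l*l + qr (nsq n)*l" by (simp only: e3 e4 mult.assoc)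
    also have "\<dots> = F*l" by (simp add: F_def algebra_simps)
    finally show ?thesis .
  qed
  have k3: "l * inverse F = inverse F * l"
  proof -
    have "l * inverse F = inverse F * F * l * inverse F" using F0 by simp
    also have "\<dots> = inverse F * (l * F) * inverse F" by (simp add: k2 mult.assoc)
    also have "\<dots> = inverse F * l" using F0 by (simp add: mult.assoc)
    finally show ?thesis .
  qed
  have "l * (inverse F * y) - (inverse F * y) * n = inverse F * (l*y - y*n)"
    by (simp add: algebra_simps flip: mult.assoc k3)
  also have "\<dots> = c" using F0 by (simp add: k1 mult.assoc[symmetric])
  finally show ?thesis by blast
qed


definition sh :: "quat \<Rightarrow> nat \<Rightarrow> nat \<Rightarrow> quat" where
  "sh x = (\<lambda>i k. if i = 0 \<and> k = 1 then x else idm i k)"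

lemma sh_simps[simp]: "sh x 0 0 = 1" "sh x 0 1 = x" "sh x 1 0 = 0" "sh x 1 1 = 1"
  "sh x 0 (Suc 0) = x" "sh x (Suc 0) 0 = 0" "sh x (Suc 0) (Suc 0) = 1"
  by (simp_all add: sh_def idm_def)

lemma all2c: assumes "P 0 0" "P 0 1" "P 1 0" "P 1 1" shows "\<And>(i::nat) (k::nat). i < 2 \<Longrightarrow> k < 2 \<Longrightarrow> P i k"
  using assms by (auto simp: less_Suc_eq numeral_2_eq_2)

lemma sh_inv: "i < 2 \<Longrightarrow> k < 2 \<Longrightarrow> mm (sh x) (sh (- x)) i k = idm i k"
  by (rule all2c[of "\<lambda>i k. mm (sh x) (sh (- x)) i k = idm i k"]) (simp_all add: mm_apply)

lemma core_tri:
  assumes U10: "U 1 0 = 0"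
  shows "\<exists>a c. rep a c idm \<and> rep a c U \<and> rep a c C"
proof (cases "U 0 0 * U 0 0 - qr (2*quat.Re (U 1 1)) * U 0 0 + qr (nsq (U 1 1)) = 0")
  case False
  obtain x where x: "U 0 0 * x - x * U 1 1 = - U 0 1" using sylvester[OF False] by blast
  define D where "D = mm (sh (- x)) (mm U (sh x))"
  have U10': "U (Suc 0) 0 = 0" using U10 by simp
  have D01: "D 0 1 = 0"
  proof -
    have "D 0 1 = U 0 0 * x + U 0 1 - x * U 1 1"
      by (simp add: D_def mm_apply U10' algebra_simps)
    also have "\<dots> = 0" using x by (simp add: algebra_simps)
    finally show ?thesis .
  qed
  have D10: "D 1 0 = 0" by (simp add: D_def mm_apply U10')
  obtain a c where r: "rep a c idm" "rep a c D" "rep a c (mm (sh (- x)) (mm C (sh x)))"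
    using core_diag[OF D01 D10] by blast
  have inv1: "\<And>i k. i < 2 \<Longrightarrow> k < 2 \<Longrightarrow> mm (sh x) (sh (- x)) i k = idm i k" by (rule sh_inv)
  have inv2: "\<And>i k. i < 2 \<Longrightarrow> k < 2 \<Longrightarrow> mm (sh (- x)) (sh (- (- x))) i k = idm i k" by (rule sh_inv)
  have r1: "rep a c (mm (sh (- x)) (mm idm (sh x)))"
  proof (rule rep_cong[OF r(1)])
    fix i k :: nat assume ik: "i < 2" "k < 2"
    have "mm (sh (- x)) (mm idm (sh x)) = mm (mm (sh (- x)) idm) (sh x)" by (simp add: mm_assoc)
    then have "mm (sh (- x)) (mm idm (sh x)) i k = mm (sh (- x)) (sh x) i k"
      by (simp add: mm_apply idm_def)
    also have "\<dots> = idm i k" using inv2[OF ik] by simp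
    finally show "idm i k = mm (sh (- x)) (mm idm (sh x)) i k" by simp
  qed
  show ?thesis
    using rep_conj[OF inv1 r1] rep_conj[OF inv1 r(2)[unfolded D_def]] rep_conj[OF inv1 r(3)] by blast
next
  case True
  obtain w where w: "w \<noteq> 0" "U 1 1 * w = w * U 0 0" using sim_exists[OF True] by blast
  show ?thesis
  proof (cases "C 1 0 = 0")
    case True
    define a where "a = t3 (v2 1 0) (v2 1 0) (v2 0 1)"
    define c where "c = t3 (v2 1 0) (v2 0 1) (v2 0 1)"
    have a: "a 0 0 = 1" "a 0 1 = 0" "a 1 0 = 1" "a 1 1 = 0" "a 2 0 = 0" "a 2 1 = 1"
      by (simp_all add: a_def)
    have c: "c 0 0 = 1" "c 0 1 = 0" "c 1 0 = 0" "c 1 1 = 1" "c 2 0 = 0" "c 2 1 = 1"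
      by (simp_all add: c_def)
    have "rep a c idm" by (rule repI[where bA=1 and bB=0 and bC=1]) (simp_all only: a c idm_simps, simp_all)
    moreover have "rep a c U" by (rule repI[where bA="U 0 0" and bB="U 0 1" and bC="U 1 1"]) (simp_all only: a c U10, simp_all)
    moreover have "rep a c C"
      by (rule repI[where bA="C 0 0" and bB="C 0 1" and bC="C 1 1"]) (simp_all only: a c True, simp_all)
    ultimately show ?thesis by blast
  next
    case False
    define y3 where "y3 = inverse (C 1 0) * (C 1 1 - w * C 0 0 * inverse w)"
    define y2 where "y2 = y3 + inverse w"
    define a where "a = t3 (v2 1 0) (v2 1 w) (v2 0 1)"
    define c where "c = t3 (v2 0 1) (v2 1 y2) (v2 1 y3)"
    have a: "a 0 0 = 1" "a 0 1 = 0" "a 1 0 = 1" "a 1 1 = w" "a 2 0 = 0" "a 2 1 = 1"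
      by (simp_all add: a_def)
    have c: "c 0 0 = 0" "c 0 1 = 1" "c 1 0 = 1" "c 1 1 = y2" "c 2 0 = 1" "c 2 1 = y3"
      by (simp_all add: c_def)
    have u11: "w * (U 0 0 * inverse w) = U 1 1"
    proof -
      have "w * (U 0 0 * inverse w) = U 1 1 * w * inverse w" by (simp only: w(2) mult.assoc)
      also have "\<dots> = U 1 1" using w(1) by (simp add: mult.assoc)
      finally show ?thesis .
    qed
    have c3: "C (Suc 0) 0 * y3 = C (Suc 0) (Suc 0) - w * (C 0 0 * inverse w)"
      using False by (simp add: y3_def mult.assoc[symmetric])
    have "rep a c idm"
      by (rule repI[where bA="- y2" and bB=1 and bC="- w"]) (simp_all only: a c idm_simps, simp_all add: y2_def algebra_simps w(1))
    moreover have "rep a c U"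
      by (rule repI[where bA="U 0 1 - U 0 0 * y2" and bB="U 0 0" and bC="- (w * U 0 0)"])
         (simp_all only: a c U10, simp_all add: y2_def algebra_simps u11)
    moreover have "rep a c C"
      by (rule repI[where bA="C 0 1 - C 0 0 * y2" and bB="C 0 0" and bC="C 1 0 - w * C 0 0"])
         (simp_all only: a c, simp_all add: y2_def algebra_simps c3)
    ultimately show ?thesis by blast
  qed
qed


definition m2 :: "quat \<Rightarrow> quat \<Rightarrow> quat \<Rightarrow> quat \<Rightarrow> nat \<Rightarrow> nat \<Rightarrow> quat" where
  "m2 a b c d = (\<lambda>i k. if i = 0 then (if k = 0 then a else b) else (if k = 0 then c else d))"

lemma m2_simps[simp]: "m2 a b c d 0 0 = a" "m2 a b c d 0 1 = b" "m2 a b c d 1 0 = c" "m2 a b c d 1 1 = d"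
  "m2 a b c d 0 (Suc 0) = b" "m2 a b c d (Suc 0) 0 = c" "m2 a b c d (Suc 0) (Suc 0) = d"
  by (simp_all add: m2_def)

lemma core2_aux:
  assumes PQ: "\<And>i k. i < 2 \<Longrightarrow> k < 2 \<Longrightarrow> mm P Q i k = idm i k"
    and QP: "\<And>i k. i < 2 \<Longrightarrow> k < 2 \<Longrightarrow> mm Q P i k = idm i k"
    and U10: "mm Q (mm B P) 1 0 = 0"
  shows "\<exists>a c. rep a c idm \<and> rep a c B \<and> rep a c C"
proof -
  obtain a c where r: "rep a c idm" "rep a c (mm Q (mm B P))" "rep a c (mm Q (mm C P))"
    using core_tri[of "mm Q (mm B P)" "mm Q (mm C P)", OF U10] by blast
  have r1: "rep a c (mm Q (mm idm P))"
  proof (rule rep_cong[OF r(1)])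
    fix i k :: nat assume ik: "i < 2" "k < 2"
    have "mm Q (mm idm P) = mm (mm Q idm) P" by (simp add: mm_assoc)
    then have "mm Q (mm idm P) i k = mm Q P i k" by (simp add: mm_apply idm_def)
    also have "\<dots> = idm i k" using QP[OF ik] by simp
    finally show "idm i k = mm Q (mm idm P) i k" by simp
  qed
  show ?thesis using rep_conj[OF PQ r1] rep_conj[OF PQ r(2)] rep_conj[OF PQ r(3)] by blast
qed

lemma core2: "\<exists>a c. rep a c idm \<and> rep a c B \<and> rep a c C"
proof -
  obtain v0 v1 l where ev: "v0 \<noteq> 0 \<or> v1 \<noteq> 0" "B 0 0 * v0 + B 0 1 * v1 = v0 * l"
      "B 1 0 * v0 + B 1 1 * v1 = v1 * l"
    using quat_eig[of B] by blast
  show ?thesis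
  proof (cases "v0 = 0")
    case False
    define P where "P = m2 v0 0 v1 1"
    define Q where "Q = m2 (inverse v0) 0 (- (v1 * inverse v0)) 1"
    have PQ: "\<And>i k. i < 2 \<Longrightarrow> k < 2 \<Longrightarrow> mm P Q i k = idm i k"
      by (rule all2c) (simp_all add: P_def Q_def mm_apply False)
    have l1: "v1 * inverse v0 * v0 = v1" using False by (simp add: mult.assoc)
    have QP: "\<And>i k. i < 2 \<Longrightarrow> k < 2 \<Longrightarrow> mm Q P i k = idm i k"
      by (rule all2c) (simp_all add: P_def Q_def mm_apply False l1)
    have "mm Q (mm B P) 1 0 = - (v1 * inverse v0) * (B 0 0 * v0 + B 0 1 * v1) + (B 1 0 * v0 + B 1 1 * v1)"
      by (simp add: P_def Q_def mm_apply)
    also have "\<dots> = - (v1 * inverse v0) * (v0 * l) + v1 * l" by (simp only: ev(2) ev(3))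
    also have "\<dots> = 0" by (simp add: mult.assoc[symmetric] l1)
    finally have U10: "mm Q (mm B P) 1 0 = 0" .
    show ?thesis by (rule core2_aux[OF PQ QP U10])
  next
    case True
    then have v1: "v1 \<noteq> 0" using ev(1) by simp
    define P where "P = m2 0 1 v1 0"
    define Q where "Q = m2 0 (inverse v1) 1 0"
    have PQ: "\<And>i k. i < 2 \<Longrightarrow> k < 2 \<Longrightarrow> mm P Q i k = idm i k"
      by (rule all2c) (simp_all add: P_def Q_def mm_apply v1)
    have QP: "\<And>i k. i < 2 \<Longrightarrow> k < 2 \<Longrightarrow> mm Q P i k = idm i k"
      by (rule all2c) (simp_all add: P_def Q_def mm_apply v1)
    have "mm Q (mm B P) 1 0 = B 0 0 * v0 + B 0 1 * v1"
      by (simp add: P_def Q_def mm_apply True)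
    also have "\<dots> = 0" using ev(2) True by simp
    finally have U10: "mm Q (mm B P) 1 0 = 0" .
    show ?thesis by (rule core2_aux[OF PQ QP U10])
  qed
qed

lemma dich: "(\<exists>N. \<forall>i<2. \<forall>k<2. mm M N i k = idm i k) \<or> (\<exists>u r. \<forall>i<2. \<forall>k<2. M i k = u i * r k)"
proof (cases "M 0 0 = 0")
  case False
  define a where "a = M 0 0"
  define b where "b = M 0 1"
  define c where "c = M 1 0"
  define d where "d = M 1 1"
  define s where "s = d - c * (inverse a * b)"
  have a0: "a \<noteq> 0" using False by (simp add: a_def)
  have aa: "\<And>X. a * (inverse a * X) = X" using a0 by (simp add: mult.assoc[symmetric])
  have aa': "\<And>X. X * inverse a * a = X" using a0 by (simp add: mult.assoc)
  show ?thesis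
  proof (cases "s = 0")
    case True
    have "\<forall>i<2. \<forall>k<2. M i k = v2 1 (c * inverse a) i * v2 a b k"
      unfolding all2 using True aa' by (simp add: a_def b_def c_def d_def s_def mult.assoc)
    then show ?thesis by blast
  next
    case False
    have ss: "\<And>X. s * (inverse s * X) = X" using False by (simp add: mult.assoc[symmetric])
    have dd: "d = s + c * (inverse a * b)" by (simp add: s_def)
    define N where "N = m2 (inverse a + inverse a * b * inverse s * c * inverse a) (- (inverse a * b * inverse s))
                         (- (inverse s * c * inverse a)) (inverse s)"
    have "\<forall>i<2. \<forall>k<2. mm M N i k = idm i k"
      unfolding all2 mm_apply
      apply (simp only: a_def[symmetric] b_def[symmetric] c_def[symmetric] d_def[symmetric] One_nat_def[symmetric])
      apply (simp add: N_def dd algebra_simps aa ss a0 False)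
      done
    then show ?thesis by blast
  qed
next
  case True
  show ?thesis
  proof (cases "M 0 1 = 0")
    case True2: True
    have "\<forall>i<2. \<forall>k<2. M i k = v2 0 1 i * v2 (M 1 0) (M 1 1) k"
      unfolding all2 using True True2 by simp
    then show ?thesis by blast
  next
    case b0: False
    show ?thesis
    proof (cases "M 1 0 = 0")
      case True3: True
      have "\<forall>i<2. \<forall>k<2. M i k = v2 (M 0 1) (M 1 1) i * v2 0 1 k"
        unfolding all2 using True True3 by simp
      then show ?thesis by blast
    next
      case c0: False
      define N where "N = m2 (- (inverse (M 1 0) * M 1 1 * inverse (M 0 1))) (inverse (M 1 0)) (inverse (M 0 1)) 0"
      have "\<forall>i<2. \<forall>k<2. mm M N i k = idm i k"
        unfolding all2 mm_apply using True b0 c0 by (simp add: N_def mult.assoc[symmetric])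
      then show ?thesis by blast
    qed
  qed
qed


lemma core_inv:
  assumes XN: "\<forall>i<2. \<forall>k<2. mm X N i k = idm i k"
  shows "\<exists>a c. rep a c X \<and> rep a c Y \<and> rep a c Z"
proof -
  obtain a c where r: "rep a c idm" "rep a c (mm N Y)" "rep a c (mm N Z)"
    using core2[of "mm N Y" "mm N Z"] by blast
  have XN': "\<And>i k. i < 2 \<Longrightarrow> k < 2 \<Longrightarrow> mm X N i k = idm i k" using XN by blast
  have "rep (\<lambda>t i. X i 0 * a t 0 + X i 1 * a t 1) c X"
  proof (rule rep_cong[OF rep_left[OF r(1)]])
    fix i k :: nat assume ik: "i < 2" "k < 2"
    show "mm X idm i k = X i k" using ik(2) by (rule mm_idm_right)
  qed
  moreover have "rep (\<lambda>t i. X i 0 * a t 0 + X i 1 * a t 1) c Y"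
  proof (rule rep_cong[OF rep_left[OF r(2)]])
    fix i k :: nat assume ik: "i < 2" "k < 2"
    have "mm X (mm N Y) = mm (mm X N) Y" by (simp add: mm_assoc)
    then have "mm X (mm N Y) i k = mm (mm X N) Y i k" by simp
    also have "\<dots> = Y i k" using XN' ik(1) by (rule mm_PQ_left)
    finally show "mm X (mm N Y) i k = Y i k" .
  qed
  moreover have "rep (\<lambda>t i. X i 0 * a t 0 + X i 1 * a t 1) c Z"
  proof (rule rep_cong[OF rep_left[OF r(3)]])
    fix i k :: nat assume ik: "i < 2" "k < 2"
    have "mm X (mm N Z) = mm (mm X N) Z" by (simp add: mm_assoc)
    then have "mm X (mm N Z) i k = mm (mm X N) Z i k" by simp
    also have "\<dots> = Z i k" using XN' ik(1) by (rule mm_PQ_left)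
    finally show "mm X (mm N Z) i k = Z i k" .
  qed
  ultimately show ?thesis by blast
qed

lemma rep_r1: assumes "\<forall>i<2. \<forall>k<2. M i k = u i * r k"
  shows "rep (t3 u x y) (t3 r x' y') M" "rep (t3 x u y) (t3 x' r y') M" "rep (t3 x y u) (t3 x' y' r) M"
proof -
  have M: "M 0 0 = u 0 * r 0" "M 0 1 = u 0 * r 1" "M 1 0 = u 1 * r 0" "M 1 1 = u 1 * r 1"
    using assms by simp_all
  show "rep (t3 u x y) (t3 r x' y') M"
    by (rule repI[where bA=1 and bB=0 and bC=0]) (simp_all only: M t3_simps, simp_all)
  show "rep (t3 x u y) (t3 x' r y') M"
    by (rule repI[where bA=0 and bB=1 and bC=0]) (simp_all only: M t3_simps, simp_all)
  show "rep (t3 x y u) (t3 x' y' r) M"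
    by (rule repI[where bA=0 and bB=0 and bC=1]) (simp_all only: M t3_simps, simp_all)
qed

lemma core_all: "\<exists>a c. rep a c A \<and> rep a c B \<and> rep a c C"
proof (cases "\<exists>N. \<forall>i<2. \<forall>k<2. mm A N i k = idm i k")
  case True
  then obtain N where "\<forall>i<2. \<forall>k<2. mm A N i k = idm i k" by blast
  then show ?thesis using core_inv by blast
next
  case nA: False
  show ?thesis
  proof (cases "\<exists>N. \<forall>i<2. \<forall>k<2. mm B N i k = idm i k")
    case True
    then obtain N where "\<forall>i<2. \<forall>k<2. mm B N i k = idm i k" by blast
    from core_inv[OF this, of A C] show ?thesis by blast
  next
    case nB: False
    show ?thesis
    proof (cases "\<exists>N. \<forall>i<2. \<forall>k<2. mm C N i k = idm i k")
      case True
      then obtain N where "\<forall>i<2. \<forall>k<2. mm C N i k = idm i k" by blast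
      from core_inv[OF this, of A B] show ?thesis by blast
    next
      case nC: False
      obtain uA rA where A: "\<forall>i<2. \<forall>k<2. A i k = uA i * rA k" using dich[of A] nA by blast
      obtain uB rB where B: "\<forall>i<2. \<forall>k<2. B i k = uB i * rB k" using dich[of B] nB by blast
      obtain uC rC where C: "\<forall>i<2. \<forall>k<2. C i k = uC i * rC k" using dich[of C] nC by blast
      have "rep (t3 uA uB uC) (t3 rA rB rC) A" "rep (t3 uA uB uC) (t3 rA rB rC) B"
        "rep (t3 uA uB uC) (t3 rA rB rC) C"
        using rep_r1(1)[OF A] rep_r1(2)[OF B] rep_r1(3)[OF C] by blast+
      then show ?thesis by blast
    qed
  qed
qed

lemma rank_le3:
  fixes T :: qtensor
  assumes T: "\<forall>i<2. \<forall>j<3. \<forall>k<2. T i j k = aA i * bA j * cA k + aB i * bB j * cB k + aC i * bC j * cC k"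
  shows "tensor_rank 2 3 2 T \<le> 3"
proof -
  define S0 where "S0 = (\<lambda>i j k. aA i * bA j * cA k)"
  define S1 where "S1 = (\<lambda>i j k. aB i * bB j * cB k)"
  define S2 where "S2 = (\<lambda>i j k. aC i * bC j * cC k)"
  define nz where "nz = (\<lambda>S::qtensor. \<exists>i<2. \<exists>j<3. \<exists>k<2. S i j k \<noteq> 0)"
  define Ss where "Ss = filter nz [S0, S1, S2]"
  have simp: "\<forall>S\<in>set Ss. simple_tensor 2 3 2 S"
  proof
    fix S assume "S \<in> set Ss"
    then have "S \<in> {x \<in> set [S0, S1, S2]. nz x}" by (simp only: Ss_def set_filter)
    then have "nz S" "S = S0 \<or> S = S1 \<or> S = S2" by auto
    then show "simple_tensor 2 3 2 S" unfolding simple_tensor_def nz_def S0_def S1_def S2_def by blast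
  qed
  have z: "\<And>S i j k. \<not> nz S \<Longrightarrow> i < 2 \<Longrightarrow> j < 3 \<Longrightarrow> k < 2 \<Longrightarrow> S i j k = 0"
    unfolding nz_def by blast
  have sum: "\<forall>i<2. \<forall>j<3. \<forall>k<2. T i j k = (\<Sum>S\<leftarrow>Ss. S i j k)"
  proof (intro allI impI)
    fix i j k :: nat assume ijk: "i < 2" "j < 3" "k < 2"
    have "T i j k = S0 i j k + S1 i j k + S2 i j k" using T ijk by (simp add: S0_def S1_def S2_def)
    also have "\<dots> = (\<Sum>S\<leftarrow>Ss. S i j k)"
      unfolding Ss_def
      by (cases "nz S0"; cases "nz S1"; cases "nz S2") (simp_all add: z[OF _ ijk])
    finally show "T i j k = (\<Sum>S\<leftarrow>Ss. S i j k)" .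
  qed
  have len: "length Ss \<le> 3" unfolding Ss_def by simp
  have "tensor_rank 2 3 2 T \<le> length Ss"
    unfolding tensor_rank_def by (rule Least_le) (use simp sum in blast)
  then show ?thesis using len by simp
qed

theorem mainTheorem9:
  fixes A B C :: "nat \<Rightarrow> nat \<Rightarrow> quat"
  shows "tensor_rank 2 3 2 (\<lambda>i j k. ([A, B, C] ! j) i k) \<le> 3"
proof -
  obtain a c where r: "rep a c A" "rep a c B" "rep a c C" using core_all by blast
  obtain \<beta>A :: "nat \<Rightarrow> quat" where bA: "\<forall>i<2. \<forall>k<2. A i k = a 0 i * \<beta>A 0 * c 0 k + a 1 i * \<beta>A 1 * c 1 k + a 2 i * \<beta>A 2 * c 2 k"
    using r(1) unfolding rep_def by blast
  obtain \<beta>B :: "nat \<Rightarrow> quat" where bB: "\<forall>i<2. \<forall>k<2. B i k = a 0 i * \<beta>B 0 * c 0 k + a 1 i * \<beta>B 1 * c 1 k + a 2 i * \<beta>B 2 * c 2 k"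
    using r(2) unfolding rep_def by blast
  obtain \<beta>C :: "nat \<Rightarrow> quat" where bC: "\<forall>i<2. \<forall>k<2. C i k = a 0 i * \<beta>C 0 * c 0 k + a 1 i * \<beta>C 1 * c 1 k + a 2 i * \<beta>C 2 * c 2 k"
    using r(3) unfolding rep_def by blast
  define b where "b = (\<lambda>t j. ([\<beta>A, \<beta>B, \<beta>C] ! j) t)"
  show ?thesis
  proof (rule rank_le3[where aA="a 0" and aB="a 1" and aC="a 2" and cA="c 0" and cB="c 1" and cC="c 2"
        and bA="b 0" and bB="b 1" and bC="b 2"])
    show "\<forall>i<2. \<forall>j<3. \<forall>k<2. ([A, B, C] ! j) i k =
        a 0 i * b 0 j * c 0 k + a 1 i * b 1 j * c 1 k + a 2 i * b 2 j * c 2 k"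
    proof (intro allI impI)
      fix i j k :: nat assume ijk: "i < 2" "j < 3" "k < 2"
      then have "j = 0 \<or> j = 1 \<or> j = 2" by auto
      then show "([A, B, C] ! j) i k = a 0 i * b 0 j * c 0 k + a 1 i * b 1 j * c 1 k + a 2 i * b 2 j * c 2 k"
        using bA bB bC ijk by (auto simp: b_def)
    qed
  qed
qed


end
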